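(* Let $\Gamma^*$ be a closed subgroup of $Sym(\mathbb Q\times\mathbb Z)$ such that the group of shifts is contained in $\Gamma^*$ and $\Gamma^*\subseteq\Gamma({A_1}_1)$. If $\Gamma^*$ initiates the full group $Sym(\mathbb Q)$, then $\Gamma^*=\Gamma(+1)$ or $\Gamma^*=\Gamma({A_1}_1)$.
   Context: $\mathbb Q\times\mathbb Z$ denotes the set $\mathbb Q\times\mathbb Z$ with the lexicographic order. $Sym(X)$ is the group of all permutations of $X$ with the topology of pointwise convergence. A vertical is a set $\{r\}\times\mathbb Z$. A permutation $g$ is systemic if it maps every vertical onto a vertical; it initiates the permutation $h$ of $\mathbb Q$ with $g(\{a\}\times\mathbb Z)=\{h(a)\}\times\mathbb Z$; a group of systemic permutations initiates the set of permutations initiated by its elements. A systemic permutation is positive if it preserves the order on each vertical and negative if it reverses the order on each vertical. A shift is a positive permutation initiating an increasing map of $\mathbb Q$. $\Gamma(+1)$ is the group of all positive permutations (the automorphism group of the successor relation) and $\Gamma({A_1}_1)$ is the group of all positive or negative permutations (the automorphism group of the 1-codirection relation ${A_1}_1(x,y,z,t)\iff x-y=z-t\wedge|x-y|=1$). *)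

theory Defs
  imports Complex_Main
begin

text \<open>The underlying set Q x Z is the type rat \<times> int (with the lexicographic order;
the order itself is not needed for the statement). Permutations are bijections of the type.\<close>

type_synonym pt = "rat \<times> int"

definition vertical :: "rat \<Rightarrow> pt set" where
  "vertical r = {r} \<times> UNIV"

definition systemic :: "(pt \<Rightarrow> pt) \<Rightarrow> bool" where
  "systemic g \<longleftrightarrow> bij g \<and> (\<forall>r. \<exists>s. g ` vertical r = vertical s)"

definition initiated :: "(pt \<Rightarrow> pt) \<Rightarrow> rat \<Rightarrow> rat" where
  "initiated g a = (THE b. g ` vertical a = vertical b)"

definition positive :: "(pt \<Rightarrow> pt) \<Rightarrow> bool" where
  "positive g \<longleftrightarrow> systemic g \<and>
     (\<forall>r m n. m < n \<longrightarrow> snd (g (r, m)) < snd (g (r, n)))"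

definition negative :: "(pt \<Rightarrow> pt) \<Rightarrow> bool" where
  "negative g \<longleftrightarrow> systemic g \<and>
     (\<forall>r m n. m < n \<longrightarrow> snd (g (r, m)) > snd (g (r, n)))"

definition shift :: "(pt \<Rightarrow> pt) \<Rightarrow> bool" where
  "shift g \<longleftrightarrow> positive g \<and> strict_mono (initiated g)"

definition Gamma_succ :: "(pt \<Rightarrow> pt) set" where
  "Gamma_succ = {g. positive g}"

definition Gamma_A11 :: "(pt \<Rightarrow> pt) set" where
  "Gamma_A11 = {g. positive g \<or> negative g}"

text \<open>Subgroup of Sym(X) and closedness in the topology of pointwise convergence.\<close>
definition sym_subgroup :: "('a \<Rightarrow> 'a) set \<Rightarrow> bool" where
  "sym_subgroup G \<longleftrightarrow> (\<forall>g\<in>G. bij g) \<and> id \<in> G \<and>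
     (\<forall>g\<in>G. \<forall>h\<in>G. g \<circ> h \<in> G) \<and> (\<forall>g\<in>G. inv g \<in> G)"

definition sym_closed :: "('a \<Rightarrow> 'a) set \<Rightarrow> bool" where
  "sym_closed G \<longleftrightarrow> (\<forall>g. bij g \<longrightarrow>
     (\<forall>F. finite F \<longrightarrow> (\<exists>h\<in>G. \<forall>x\<in>F. h x = g x)) \<longrightarrow> g \<in> G)"

end

theory Submission
  imports Defs
begin

lemma vertical_mem[simp]: "x \<in> vertical r \<longleftrightarrow> fst x = r"
  by (cases x) (auto simp: vertical_def)

lemma vertical_inj: "vertical r = vertical s \<Longrightarrow> r = s"
proof -
  assume "vertical r = vertical s"
  moreover have "(r,0::int) \<in> vertical r" by simp
  ultimately have "(r,0::int) \<in> vertical s" by simp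
  then show ?thesis by simp
qed

lemma sys_init:
  assumes "systemic g" shows "g ` vertical a = vertical (initiated g a)"
proof -
  obtain s where s: "g ` vertical a = vertical s" using assms systemic_def by blast
  have "initiated g a = s" unfolding initiated_def
    by (rule the_equality) (use s vertical_inj in auto)
  then show ?thesis using s by simp
qed

lemma sys_fst: "systemic g \<Longrightarrow> fst (g (a,n)) = initiated g a"
proof -
  assume "systemic g"
  have "g (a,n) \<in> g ` vertical a" by simp
  then show ?thesis using sys_init[OF \<open>systemic g\<close>, of a] by simp
qed

lemma sys_surj: "systemic g \<Longrightarrow> \<exists>n. g (a,n) = (initiated g a, m)"
proof -
  assume sg: "systemic g"
  have "(initiated g a, m) \<in> g ` vertical a" using sys_init[OF sg, of a] by simp
  then obtain x where "fst x = a" "g x = (initiated g a, m)" by auto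
  then show ?thesis by (metis prod.collapse)
qed

lemma const_int:
  fixes u :: "int \<Rightarrow> int"
  assumes "\<And>i. u (i+1) = u i" shows "u n = u 0"
proof (induction n rule: int_induct[where k=0])
  case base then show ?case by simp
next
  case (step1 i) then show ?case using assms by simp
next
  case (step2 i) then show ?case using assms[of "i-1"] by simp
qed

lemma pos_form:
  assumes "positive g" shows "g (r,n) = (initiated g r, n + snd (g (r,0)))"
proof -
  define f where "f n = snd (g (r,n))" for n
  have sg: "systemic g" using assms positive_def by auto
  have sm: "m < n \<Longrightarrow> f m < f n" for m n using assms unfolding positive_def f_def by auto
  have le: "m \<le> n \<Longrightarrow> f m \<le> f n" for m n using sm[of m n] by (cases "m = n") auto
  have su: "\<exists>n. f n = m" for m using sys_surj[OF sg, of r m] unfolding f_def by (metis snd_conv)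
  have step: "f (i+1) = f i + 1" for i
  proof -
    obtain m where m: "f m = f i + 1" using su by blast
    have "i < m" using le[of m i] m by (cases "m \<le> i") auto
    then have "f (i+1) \<le> f m" using le by simp
    moreover have "f i < f (i+1)" using sm by simp
    ultimately show ?thesis using m by simp
  qed
  have "(\<lambda>n. f n - n) n = (\<lambda>n. f n - n) 0" by (rule const_int) (simp add: step)
  then have "snd (g (r,n)) = n + snd (g (r,0))" unfolding f_def by simp
  moreover have "fst (g (r,n)) = initiated g r" using sys_fst[OF sg] .
  ultimately show ?thesis by (metis prod.collapse)
qed

lemma neg_form:
  assumes "negative g" shows "g (r,n) = (initiated g r, snd (g (r,0)) - n)"
proof -
  define f where "f n = snd (g (r,n))" for n
  have sg: "systemic g" using assms negative_def by auto
  have sm: "m < n \<Longrightarrow> f m > f n" for m n using assms unfolding negative_def f_def by auto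
  have le: "m \<le> n \<Longrightarrow> f m \<ge> f n" for m n using sm[of m n] by (cases "m = n") auto
  have su: "\<exists>n. f n = m" for m using sys_surj[OF sg, of r m] unfolding f_def by (metis snd_conv)
  have step: "f (i+1) = f i - 1" for i
  proof -
    obtain m where m: "f m = f i - 1" using su by blast
    have "i < m" using le[of m i] m by (cases "m \<le> i") auto
    then have "f (i+1) \<ge> f m" using le by simp
    moreover have "f i > f (i+1)" using sm by simp
    ultimately show ?thesis using m by simp
  qed
  have "(\<lambda>n. f n + n) n = (\<lambda>n. f n + n) 0" by (rule const_int) (simp add: step)
  then have "snd (g (r,n)) = snd (g (r,0)) - n" unfolding f_def by simp
  moreover have "fst (g (r,n)) = initiated g r" using sys_fst[OF sg] .
  ultimately show ?thesis by (metis prod.collapse)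
qed

lemma pos_intro:
  assumes "bij g" "\<And>r n. g (r,n) = (h r, n + d r)" shows "positive g"
proof -
  have "g ` vertical r = vertical (h r)" for r
  proof
    show "g ` vertical r \<subseteq> vertical (h r)" using assms(2) by auto
    show "vertical (h r) \<subseteq> g ` vertical r"
    proof
      fix x assume "x \<in> vertical (h r)"
      then have "x = g (r, snd x - d r)" using assms(2) by (cases x) auto
      then show "x \<in> g ` vertical r" by (metis fst_conv image_eqI vertical_mem)
    qed
  qed
  then show ?thesis unfolding positive_def systemic_def using assms by auto
qed

lemma pos_initiated:
  assumes "bij g" "\<And>r n. g (r,n) = (h r, n + d r)" shows "initiated g = h"
proof
  fix r
  have "systemic g" using pos_intro[OF assms] positive_def by auto
  from sys_fst[OF this, of r 0] show "initiated g r = h r" using assms(2) by simp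
qed

lemma pos_inj: assumes "positive p" shows "inj (initiated p)"
proof
  fix a b assume e: "initiated p a = initiated p b"
  have "inj p" using assms unfolding positive_def systemic_def using bij_is_inj by auto
  have 1: "p (a,0) = (initiated p a, 0 + snd (p (a,0)))" by (rule pos_form[OF assms])
  have 2: "p (b, snd (p (a,0)) - snd (p (b,0))) = (initiated p b, (snd (p (a,0)) - snd (p (b,0))) + snd (p (b,0)))" by (rule pos_form[OF assms])
  have "p (a,0) = p (b, snd (p (a,0)) - snd (p (b,0)))"
    by (subst 1, subst 2) (simp add: e)
  then show "a = b" using \<open>inj p\<close> by (auto dest: injD)
qed

definition swp :: "'a \<Rightarrow> 'a \<Rightarrow> 'a \<Rightarrow> 'a" where
  "swp a b z = (if z = a then b else if z = b then a else z)"

lemma bij_swp: "bij (swp a b)"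
proof -
  have "swp a b \<circ> swp a b = id" by (rule ext) (simp add: swp_def)
  then show ?thesis using o_bij by blast
qed

lemma extend_perm:
  fixes f :: "'a \<Rightarrow> 'a"
  shows "finite D \<Longrightarrow> inj_on f D \<Longrightarrow> \<exists>k. bij k \<and> (\<forall>x\<in>D. k x = f x)"
proof (induction D rule: finite_induct)
  case empty show ?case by (metis bij_id empty_iff)
next
  case (insert x D)
  have "inj_on f D" by (rule inj_on_subset[OF insert.prems]) auto
  then obtain k where k: "bij k" "\<forall>y\<in>D. k y = f y" using insert.IH by blast
  define k' where "k' = swp (k x) (f x) \<circ> k"
  have "bij k'" unfolding k'_def by (rule bij_comp[OF k(1) bij_swp])
  moreover have "\<forall>y\<in>insert x D. k' y = f y"
  proof
    fix y assume y: "y \<in> insert x D"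
    show "k' y = f y"
    proof (cases "y = x")
      case True then show ?thesis by (simp add: k'_def swp_def)
    next
      case False
      then have yD: "y \<in> D" using y by auto
      have "inj k" using k(1) by (rule bij_is_inj)
      then have "k y \<noteq> k x" using False by (auto dest: injD)
      moreover have "f y \<noteq> f x"
      proof
        assume "f y = f x"
        then have "y = x" by (rule inj_onD[OF insert.prems]) (use yD in auto)
        then show False using False by simp
      qed
      ultimately show ?thesis using k(2) yD by (simp add: k'_def swp_def)
    qed
  qed
  ultimately show ?case by blast
qed

lemma sq_ext:
  fixes h :: "rat \<Rightarrow> rat"
  assumes "finite S" "inj_on h S"
  shows "\<exists>k. bij k \<and> (\<forall>s\<in>S. k (k s) = h s)"
proof -
  have "infinite (UNIV - (S \<union> h ` S) :: rat set)"
    using assms(1) infinite_UNIV_char_0 by (simp add: Diff_infinite_finite)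
  then obtain B where B: "B \<subseteq> UNIV - (S \<union> h ` S)" "finite B" "card B = card S"
    using infinite_arbitrarily_large by metis
  obtain \<beta> where bb: "bij_betw \<beta> S B" using finite_same_card_bij[OF assms(1) B(2)] B(3) by metis
  have ib: "inj_on \<beta> S" and ibs: "\<beta> ` S = B" using bij_betw_imp_inj_on[OF bb] bij_betw_imp_surj_on[OF bb] by auto
  define f where "f x = (if x \<in> S then \<beta> x else h (inv_into S \<beta> x))" for x
  have inj: "inj_on f (S \<union> B)"
  proof (rule inj_onI)
    fix x y assume x: "x \<in> S \<union> B" and y: "y \<in> S \<union> B" and e: "f x = f y"
    have invS: "z \<in> B \<Longrightarrow> inv_into S \<beta> z \<in> S" for z using ibs by (metis inv_into_into)
    have finv: "z \<in> B \<Longrightarrow> \<beta> (inv_into S \<beta> z) = z" for z using ibs by (metis f_inv_into_f)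
    show "x = y"
    proof (cases "x \<in> S")
      case xS: True
      show ?thesis
      proof (cases "y \<in> S")
        case True then show ?thesis using xS e ib by (simp add: f_def inj_on_def)
      next
        case False
        then have "y \<in> B" using y by auto
        then have "h (inv_into S \<beta> y) \<in> h ` S" using invS by auto
        moreover have "\<beta> x \<in> B" using xS ibs by auto
        ultimately show ?thesis using e xS False B(1) by (auto simp: f_def)
      qed
    next
      case xS: False
      then have xB: "x \<in> B" using x by auto
      show ?thesis
      proof (cases "y \<in> S")
        case True
        then have "h (inv_into S \<beta> x) \<in> h ` S" using invS xB by auto
        moreover have "\<beta> y \<in> B" using True ibs by auto
        ultimately show ?thesis using e xS True B(1) by (auto simp: f_def)
      next
        case False
        then have yB: "y \<in> B" using y by auto
        have "inv_into S \<beta> x = inv_into S \<beta> y"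
          using e xS False assms(2) invS[OF xB] invS[OF yB] by (simp add: f_def inj_on_def)
        then show ?thesis using finv[OF xB] finv[OF yB] by metis
      qed
    qed
  qed
  obtain k where k: "bij k" "\<forall>x\<in>S \<union> B. k x = f x"
    using extend_perm[OF _ inj] assms(1) B(2) by blast
  have "k (k s) = h s" if s: "s \<in> S" for s
  proof -
    have "k s = \<beta> s" using k(2) s by (simp add: f_def)
    moreover have "\<beta> s \<in> B" "\<beta> s \<notin> S" using s ibs B(1) by auto
    ultimately show ?thesis using k(2) inv_into_f_f[OF ib s] by (simp add: f_def)
  qed
  then show ?thesis using k(1) by blast
qed

theorem mainTheorem9:
  fixes G :: "(pt \<Rightarrow> pt) set"
  assumes "sym_subgroup G"
    and "sym_closed G"
    and "{g. shift g} \<subseteq> G"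
    and "G \<subseteq> Gamma_A11"
    and "initiated ` G = {h. bij h}"
  shows "G = Gamma_succ \<or> G = Gamma_A11"
proof -
  have bijG: "\<And>g. g \<in> G \<Longrightarrow> bij g" and compG: "\<And>g h. g \<in> G \<Longrightarrow> h \<in> G \<Longrightarrow> g \<circ> h \<in> G"
    and invG: "\<And>g. g \<in> G \<Longrightarrow> inv g \<in> G"
    using assms(1) unfolding sym_subgroup_def by auto
  have pn: "\<And>g. g \<in> G \<Longrightarrow> positive g \<or> negative g" using assms(4) unfolding Gamma_A11_def by auto
  have posG: "p \<in> G" if pp: "positive p" for p
  proof -
    have bp: "bij p" using pp unfolding positive_def systemic_def by auto
    define hp where "hp = initiated p"
    define dp where "dp r = snd (p (r,0))" for r
    have pf: "p (r,n) = (hp r, n + dp r)" for r n unfolding hp_def dp_def by (rule pos_form[OF pp])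
    have "\<exists>x\<in>G. \<forall>y\<in>F. x y = p y" if fF: "finite F" for F
    proof -
      have "inj_on hp (fst ` F)" using pos_inj[OF pp] hp_def by (simp add: inj_on_def inj_def)
      then obtain k where k: "bij k" "\<forall>s\<in>fst ` F. k (k s) = hp s"
        using sq_ext[of "fst ` F" hp] fF by blast
      have "k \<in> initiated ` G" using assms(5) k(1) by simp
      then obtain g where gG: "g \<in> G" and gk: "initiated g = k" by auto
      obtain e where qe: "\<And>r n. (g \<circ> g) (r,n) = (k (k r), n + e r)"
      proof (cases "positive g")
        case True
        have "(g \<circ> g) (r,n) = (k (k r), n + (snd (g (r,0)) + snd (g (k r,0))))" for r n
        proof -
          have a: "g (r,n) = (k r, n + snd (g (r,0)))" by (rule pos_form[OF True, of r n, unfolded gk])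
          have b: "g (k r, n + snd (g (r,0))) = (k (k r), n + snd (g (r,0)) + snd (g (k r,0)))"
            by (rule pos_form[OF True, unfolded gk])
          show ?thesis unfolding comp_def a b by (simp add: algebra_simps)
        qed
        then show ?thesis by (rule that)
      next
        case False
        then have ng: "negative g" using pn gG by blast
        have "(g \<circ> g) (r,n) = (k (k r), n + (snd (g (k r,0)) - snd (g (r,0))))" for r n
        proof -
          have a: "g (r,n) = (k r, snd (g (r,0)) - n)" by (rule neg_form[OF ng, of r n, unfolded gk])
          have b: "g (k r, snd (g (r,0)) - n) = (k (k r), snd (g (k r,0)) - (snd (g (r,0)) - n))"
            by (rule neg_form[OF ng, unfolded gk])
          show ?thesis unfolding comp_def a b by (simp add: algebra_simps)
        qed
        then show ?thesis by (rule that)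
      qed
      define s where "s x = (fst x, snd x + (dp (fst x) - e (fst x)))" for x
      define s' where "s' x = (fst x, snd x - (dp (fst x) - e (fst x)))" for x
      have "s' \<circ> s = id" by (rule ext) (simp add: s_def s'_def)
      moreover have "s \<circ> s' = id" by (rule ext) (simp add: s_def s'_def)
      ultimately have bs: "bij s" using o_bij by blast
      have sf: "s (r,n) = (id r, n + (dp r - e r))" for r n by (simp add: s_def)
      have "positive s" using pos_intro[OF bs sf] .
      moreover have "initiated s = id" using pos_initiated[OF bs sf] .
      ultimately have "shift s" unfolding shift_def by (simp add: strict_mono_def)
      then have sG: "s \<in> G" using assms(3) by blast
      have "(g \<circ> g) \<circ> s \<in> G" using compG[OF compG[OF gG gG] sG] .
      moreover have "\<forall>y\<in>F. ((g \<circ> g) \<circ> s) y = p y"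
      proof
        fix y assume y: "y \<in> F"
        obtain r n where yrn: "y = (r,n)" by (cases y)
        have "r \<in> fst ` F" using y yrn by force
        show "((g \<circ> g) \<circ> s) y = p y"
          using qe[of r "n + (dp r - e r)"] k(2) pf[of r n] yrn \<open>r \<in> fst ` F\<close> by (simp add: s_def)
      qed
      ultimately show ?thesis by blast
    qed
    then show "p \<in> G" using assms(2) bp unfolding sym_closed_def by blast
  qed
  show ?thesis
  proof (cases "\<exists>g\<in>G. negative g")
    case True
    then obtain g0 where g0: "g0 \<in> G" "negative g0" by blast
    have "f \<in> G" if f: "f \<in> Gamma_A11" for f
    proof (cases "positive f")
      case True then show ?thesis using posG by blast
    next
      case False
      then have nf: "negative f" using f unfolding Gamma_A11_def by auto
      have bf: "bij f" and b0: "bij g0" using nf g0(2) unfolding negative_def systemic_def by auto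
      have "(f \<circ> g0) (r,n) = (initiated f (initiated g0 r),
              n + (snd (f (initiated g0 r, 0)) - snd (g0 (r,0))))" for r n
      proof -
        have a: "g0 (r,n) = (initiated g0 r, snd (g0 (r,0)) - n)" by (rule neg_form[OF g0(2)])
        have b: "f (initiated g0 r, snd (g0 (r,0)) - n) = (initiated f (initiated g0 r), snd (f (initiated g0 r, 0)) - (snd (g0 (r,0)) - n))"
          by (rule neg_form[OF nf])
        show ?thesis unfolding comp_def a b by (simp add: algebra_simps)
      qed
      then have "positive (f \<circ> g0)" by (rule pos_intro[OF bij_comp[OF b0 bf]])
      then have "f \<circ> g0 \<in> G" using posG by blast
      then have "(f \<circ> g0) \<circ> inv g0 \<in> G" using compG invG g0(1) by blast
      moreover have "(f \<circ> g0) \<circ> inv g0 = f"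
      proof -
        have gi: "g0 \<circ> inv g0 = id" using surj_iff[THEN iffD1, OF bij_is_surj[OF b0]] .
        show ?thesis unfolding comp_assoc gi by simp
      qed
      ultimately show ?thesis by simp
    qed
    then have "G = Gamma_A11" using assms(4) by blast
    then show ?thesis by blast
  next
    case False
    then have "G \<subseteq> Gamma_succ" using pn unfolding Gamma_succ_def by blast
    moreover have "Gamma_succ \<subseteq> G" using posG unfolding Gamma_succ_def by blast
    ultimately show ?thesis by blast
  qed
qed

end
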